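(* Let $A,B\in\mathbb{R}_+^{n\times n}$ be circulant matrices with $\lambda(A)=\lambda(B)\ne0$ and $A\le B$. Then $$x\in\mathrm{Attr}(B)\iff B^{n^2}_{i\bullet}\otimes x=B^{n^2}_{j\bullet}\otimes x\ \text{ for all } i,j\in\{1,\dots,n\}\text{ with } i\sim_A j.$$
   Context: Max algebra on $\mathbb{R}_+$: $\oplus=\max$, ordinary product; $B^t$ max-algebraic power, $B^t_{i\bullet}$ its $i$-th row, $B^t_{i\bullet}\otimes x=\max_k(B^t)_{i,k}x_k$. $\lambda(\cdot)$: greatest max-algebraic eigenvalue (maximum cycle geometric mean). $\mathrm{Attr}(B)=\{x\in\mathbb{R}_+^n: B^{t+1}\otimes x=\lambda(B)B^t\otimes x\text{ for some }t\ge0\}$. The critical digraph $\mathcal{C}(A)$ consists of nodes and edges of the cycles of the weighted digraph of $A$ whose geometric mean equals $\lambda(A)$; $i\sim_A j$ means $i$ and $j$ lie in the same strongly connected component of $\mathcal{C}(A)$. Circulant: $A_{i,j}=a_t$ with $t\equiv j-i\pmod n$, $t\in\{0,\dots,n-1\}$. *)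

theory Defs
  imports Complex_Main
begin

text \<open>An n x n matrix is a function
  nat \<Rightarrow> nat \<Rightarrow> real, only the entries with indices in {0..<n} matter
  (index i here corresponds to i+1 in the paper).\<close>

definition mmult :: "nat \<Rightarrow> (nat \<Rightarrow> nat \<Rightarrow> real) \<Rightarrow> (nat \<Rightarrow> nat \<Rightarrow> real) \<Rightarrow> nat \<Rightarrow> nat \<Rightarrow> real" where
  "mmult n A B i j = Max ((\<lambda>k. A i k * B k j) ` {0..<n})"

definition mone :: "nat \<Rightarrow> nat \<Rightarrow> real" where
  "mone i j = (if i = j then 1 else 0)"

primrec mpow :: "nat \<Rightarrow> (nat \<Rightarrow> nat \<Rightarrow> real) \<Rightarrow> nat \<Rightarrow> nat \<Rightarrow> nat \<Rightarrow> real" where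
  "mpow n A 0 = mone"
| "mpow n A (Suc t) = mmult n A (mpow n A t)"

definition row_mult :: "nat \<Rightarrow> (nat \<Rightarrow> nat \<Rightarrow> real) \<Rightarrow> nat \<Rightarrow> (nat \<Rightarrow> real) \<Rightarrow> real" where
  "row_mult n M i x = Max ((\<lambda>k. M i k * x k) ` {0..<n})"

definition is_cycle :: "nat \<Rightarrow> (nat \<Rightarrow> nat \<Rightarrow> real) \<Rightarrow> nat list \<Rightarrow> bool" where
  "is_cycle n A cs \<longleftrightarrow> cs \<noteq> [] \<and> distinct cs \<and> set cs \<subseteq> {0..<n} \<and>
     (\<forall>m<length cs. A (cs ! m) (cs ! ((m + 1) mod length cs)) > 0)"

definition cycle_weight :: "(nat \<Rightarrow> nat \<Rightarrow> real) \<Rightarrow> nat list \<Rightarrow> real" where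
  "cycle_weight A cs = (\<Prod>m<length cs. A (cs ! m) (cs ! ((m + 1) mod length cs)))"

definition cycle_mean :: "(nat \<Rightarrow> nat \<Rightarrow> real) \<Rightarrow> nat list \<Rightarrow> real" where
  "cycle_mean A cs = root (length cs) (cycle_weight A cs)"

definition cycle_edges :: "nat list \<Rightarrow> (nat \<times> nat) set" where
  "cycle_edges cs = {(cs ! m, cs ! ((m + 1) mod length cs)) | m. m < length cs}"

definition mlambda :: "nat \<Rightarrow> (nat \<Rightarrow> nat \<Rightarrow> real) \<Rightarrow> real" where
  "mlambda n A = (if {cs. is_cycle n A cs} = {} then 0
                  else Max (cycle_mean A ` {cs. is_cycle n A cs}))"

definition critical_cycles :: "nat \<Rightarrow> (nat \<Rightarrow> nat \<Rightarrow> real) \<Rightarrow> nat list set" where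
  "critical_cycles n A = {cs. is_cycle n A cs \<and> cycle_mean A cs = mlambda n A}"

definition crit_nodes :: "nat \<Rightarrow> (nat \<Rightarrow> nat \<Rightarrow> real) \<Rightarrow> nat set" where
  "crit_nodes n A = (\<Union>cs\<in>critical_cycles n A. set cs)"

definition crit_edges :: "nat \<Rightarrow> (nat \<Rightarrow> nat \<Rightarrow> real) \<Rightarrow> (nat \<times> nat) set" where
  "crit_edges n A = (\<Union>cs\<in>critical_cycles n A. cycle_edges cs)"

definition crit_equiv :: "nat \<Rightarrow> (nat \<Rightarrow> nat \<Rightarrow> real) \<Rightarrow> nat \<Rightarrow> nat \<Rightarrow> bool" where
  "crit_equiv n A i j \<longleftrightarrow> i \<in> crit_nodes n A \<and> j \<in> crit_nodes n A \<and>
     (i, j) \<in> (crit_edges n A)\<^sup>* \<and> (j, i) \<in> (crit_edges n A)\<^sup>*"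

definition nonneg_mat :: "nat \<Rightarrow> (nat \<Rightarrow> nat \<Rightarrow> real) \<Rightarrow> bool" where
  "nonneg_mat n A \<longleftrightarrow> (\<forall>i<n. \<forall>j<n. 0 \<le> A i j)"

definition circulant :: "nat \<Rightarrow> (nat \<Rightarrow> nat \<Rightarrow> real) \<Rightarrow> bool" where
  "circulant n A \<longleftrightarrow> (\<exists>a :: nat \<Rightarrow> real. \<forall>i<n. \<forall>j<n. A i j = a (nat ((int j - int i) mod int n)))"

definition mat_le :: "nat \<Rightarrow> (nat \<Rightarrow> nat \<Rightarrow> real) \<Rightarrow> (nat \<Rightarrow> nat \<Rightarrow> real) \<Rightarrow> bool" where
  "mat_le n A B \<longleftrightarrow> (\<forall>i<n. \<forall>j<n. A i j \<le> B i j)"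

definition Attr :: "nat \<Rightarrow> (nat \<Rightarrow> nat \<Rightarrow> real) \<Rightarrow> (nat \<Rightarrow> real) set" where
  "Attr n B = {x. (\<forall>i<n. 0 \<le> x i) \<and>
     (\<exists>t. \<forall>i<n. row_mult n (mpow n B (t + 1)) i x = mlambda n B * row_mult n (mpow n B t) i x)}"

end

theory Submission imports Defs "HOL-Number_Theory.Cong" begin

lemma mpow_Suc_ge:
  assumes "l < n"
  shows "M i l * mpow n M k l j \<le> mpow n M (Suc k) i j"
  using assms by (auto simp: mmult_def intro!: Max_ge)

lemma mpow_nonneg:
  assumes "\<forall>i<n. \<forall>j<n. 0 \<le> M i j" and "i < n" and "j < n"
  shows "0 \<le> mpow n M k i j"
  using assms(2,3)
proof (induction k arbitrary: i j)
  case 0 then show ?case by (simp add: mone_def)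
next
  case (Suc k)
  have "0 \<le> M i 0 * mpow n M k 0 j" using Suc assms(1) by simp
  also have "\<dots> \<le> mpow n M (Suc k) i j" using Suc by (intro mpow_Suc_ge) auto
  finally show ?case .
qed

lemma walk_bound:
  assumes nn: "\<forall>i<n. \<forall>j<n. 0 \<le> M i j"
    and w: "\<forall>m\<le>k. w m < n"
  shows "(\<Prod>m<k. M (w m) (w (Suc m))) \<le> mpow n M k (w 0) (w k)"
  using w
proof (induction k arbitrary: w)
  case 0 then show ?case by (simp add: mone_def)
next
  case (Suc k)
  have IH: "(\<Prod>m<k. M (w (Suc m)) (w (Suc (Suc m)))) \<le> mpow n M k (w 1) (w (Suc k))"
    using Suc.IH[of "\<lambda>m. w (Suc m)"] Suc.prems by simp
  have "(\<Prod>m<Suc k. M (w m) (w (Suc m))) = M (w 0) (w 1) * (\<Prod>m<k. M (w (Suc m)) (w (Suc (Suc m))))"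
    by (subst prod.lessThan_Suc_shift) simp
  also have "\<dots> \<le> M (w 0) (w 1) * mpow n M k (w 1) (w (Suc k))"
    using IH nn Suc.prems by (intro mult_left_mono) auto
  also have "\<dots> \<le> mpow n M (Suc k) (w 0) (w (Suc k))"
    using Suc.prems by (intro mpow_Suc_ge) auto
  finally show ?case .
qed

lemma walk_attain:
  assumes "n > 0" and "i < n"
  shows "mpow n M k i j = 0 \<or> (\<exists>w. w 0 = i \<and> w k = j \<and> (\<forall>m\<le>k. w m < n) \<and>
            mpow n M k i j = (\<Prod>m<k. M (w m) (w (Suc m))))"
  using assms(2)
proof (induction k arbitrary: i)
  case 0
  show ?case
  proof (cases "i = j")
    case True
    then show ?thesis using 0 by (intro disjI2 exI[of _ "\<lambda>_. i"]) (auto simp: mone_def)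
  qed (simp add: mone_def)
next
  case (Suc k)
  have fin: "finite ((\<lambda>l. M i l * mpow n M k l j) ` {0..<n})" "(\<lambda>l. M i l * mpow n M k l j) ` {0..<n} \<noteq> {}"
    using assms by auto
  obtain l where l: "l < n" "mpow n M (Suc k) i j = M i l * mpow n M k l j"
    using Max_in[OF fin] by (auto simp: mmult_def)
  from Suc.IH[OF l(1)] show ?case
  proof
    assume "mpow n M k l j = 0" then show ?thesis using l by simp
  next
    assume "\<exists>w. w 0 = l \<and> w k = j \<and> (\<forall>m\<le>k. w m < n) \<and> mpow n M k l j = (\<Prod>m<k. M (w m) (w (Suc m)))"
    then obtain w where w: "w 0 = l" "w k = j" "\<forall>m\<le>k. w m < n" "mpow n M k l j = (\<Prod>m<k. M (w m) (w (Suc m)))"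
      by blast
    define w' where "w' = (\<lambda>m. if m = 0 then i else w (m - 1))"
    have "w' 0 = i" "w' (Suc k) = j" "\<forall>m\<le>Suc k. w' m < n"
      using w Suc.prems by (auto simp: w'_def)
    moreover have "mpow n M (Suc k) i j = (\<Prod>m<Suc k. M (w' m) (w' (Suc m)))"
      using l w by (subst prod.lessThan_Suc_shift) (simp add: w'_def)
    ultimately show ?thesis by blast
  qed
qed

lemma mpow_add:
  assumes nn: "\<forall>i<n. \<forall>j<n. 0 \<le> M i j" and "i < n" "k < n" "j < n"
  shows "mpow n M a i k * mpow n M b k j \<le> mpow n M (a + b) i j"
  using assms(2)
proof (induction a arbitrary: i)
  case 0
  then show ?case using mpow_nonneg[OF nn] assms by (auto simp: mone_def)
next
  case (Suc a)
  have fin: "finite ((\<lambda>l. M i l * mpow n M a l k) ` {0..<n})" "(\<lambda>l. M i l * mpow n M a l k) ` {0..<n} \<noteq> {}"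
    using assms by auto
  obtain l where l: "l < n" "mpow n M (Suc a) i k = M i l * mpow n M a l k"
    using Max_in[OF fin] by (auto simp: mmult_def)
  have "mpow n M (Suc a) i k * mpow n M b k j = M i l * (mpow n M a l k * mpow n M b k j)"
    using l by simp
  also have "\<dots> \<le> M i l * mpow n M (a + b) l j"
    using Suc.IH[OF l(1)] nn Suc.prems l by (intro mult_left_mono) auto
  also have "\<dots> \<le> mpow n M (Suc (a + b)) i j" using l by (intro mpow_Suc_ge)
  finally show ?case by simp
qed

lemma tau_pow:
  assumes "\<forall>i<n. M i ((i + \<tau>) mod n) = c" and "0 \<le> c" and "n > 0" and "u < n"
  shows "c ^ m \<le> mpow n M m u ((u + m * \<tau>) mod n)"
  using assms(4)
proof (induction m arbitrary: u)
  case 0 then show ?case by (simp add: mone_def)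
next
  case (Suc m)
  have eq: "((u + \<tau>) mod n + m * \<tau>) mod n = (u + Suc m * \<tau>) mod n"
    by (simp add: mod_add_left_eq add.assoc)
  have "c ^ Suc m = M u ((u + \<tau>) mod n) * c ^ m" using assms Suc.prems by simp
  also have "\<dots> \<le> M u ((u + \<tau>) mod n) * mpow n M m ((u + \<tau>) mod n) (((u + \<tau>) mod n + m * \<tau>) mod n)"
    using Suc.IH[of "(u + \<tau>) mod n"] assms Suc.prems by (intro mult_left_mono) auto
  also have "\<dots> \<le> mpow n M (Suc m) u ((u + Suc m * \<tau>) mod n)"
    unfolding eq using assms by (intro mpow_Suc_ge) auto
  finally show ?case .
qed

lemma modfact:
  fixes a b p q \<tau> n :: nat
  assumes "\<tau> < n" "(a + p*(n-\<tau>)) mod n = (b + q*(n-\<tau>)) mod n" "p \<le> q" "b < n"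
  shows "b = (a + (q-p)*\<tau>) mod n"
proof -
  have e: "a + (q-p)*\<tau> + q*(n-\<tau>) = (a + p*(n-\<tau>)) + (q-p)*n"
  proof -
    have "q*(n-\<tau>) = p*(n-\<tau>) + (q-p)*(n-\<tau>)" using assms(3) by (metis add_mult_distrib le_add_diff_inverse)
    moreover have "(q-p)*\<tau> + (q-p)*(n-\<tau>) = (q-p)*n" using assms(1) by (simp add: add_mult_distrib2[symmetric])
    ultimately show ?thesis by simp
  qed
  have "(a + (q-p)*\<tau> + q*(n-\<tau>)) mod n = (b + q*(n-\<tau>)) mod n"
    unfolding e using assms(2) by simp
  then have "(a + (q-p)*\<tau>) mod n = b mod n"
    using cong_add_rcancel_nat unfolding cong_def by blast
  then show ?thesis using assms(4) by simp
qed

lemma key: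
  assumes nn: "\<forall>i<n. \<forall>j<n. 0 \<le> M i j" and n0: "n > 0" and tn: "\<tau> < n"
    and le: "\<forall>i<n. \<forall>j<n. M i j \<le> c"
    and tau: "\<forall>i<n. M i ((i + \<tau>) mod n) = c"
    and sh: "\<forall>i<n. \<forall>j<n. M ((i + \<tau>) mod n) ((j + \<tau>) mod n) = M i j"
    and c0: "0 \<le> c" and ns: "n \<le> Suc s" and i: "i < n" and j: "j < n"
  shows "mpow n M (Suc s) i j = c * mpow n M s ((i + \<tau>) mod n) j"
proof (rule antisym)
  show "c * mpow n M s ((i + \<tau>) mod n) j \<le> mpow n M (Suc s) i j"
    using mpow_Suc_ge[of "(i + \<tau>) mod n" n M i s j] tau i n0 by simp
next
  have nn2: "0 \<le> mpow n M k u v" if "u < n" "v < n" for k u v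
    using mpow_nonneg[OF nn that] .
  from walk_attain[OF n0 i, of M "Suc s" j]
  show "mpow n M (Suc s) i j \<le> c * mpow n M s ((i + \<tau>) mod n) j"
  proof
    assume "mpow n M (Suc s) i j = 0"
    then show ?thesis using nn2 c0 i j n0 by simp
  next
    assume "\<exists>w. w 0 = i \<and> w (Suc s) = j \<and> (\<forall>m\<le>Suc s. w m < n) \<and>
            mpow n M (Suc s) i j = (\<Prod>m<Suc s. M (w m) (w (Suc m)))"
    then obtain w where w0: "w 0 = i" and ws: "w (Suc s) = j" and wn: "\<forall>m\<le>Suc s. w m < n"
      and wp: "mpow n M (Suc s) i j = (\<Prod>m<Suc s. M (w m) (w (Suc m)))" by blast
    define y where "y m = (w m + m * (n - \<tau>)) mod n" for m
    have "\<not> inj_on y {0..Suc s}"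
    proof
      assume inj: "inj_on y {0..Suc s}"
      have "card (y ` {0..Suc s}) = Suc (Suc s)" using card_image[OF inj] by simp
      moreover have "card (y ` {0..Suc s}) \<le> card {0..<n}"
        by (rule card_mono) (auto simp: y_def n0)
      ultimately show False using ns by simp
    qed
    then obtain p q where pq: "p < q" "q \<le> Suc s" "y p = y q"
      unfolding inj_on_def by (metis atLeastAtMost_iff linorder_neqE_nat)
    have wq: "w q = (w p + (q - p) * \<tau>) mod n"
      using modfact[OF tn, of "w p" p "w q" q] pq wn unfolding y_def by simp
    define f where "f m = M (w m) (w (Suc m))" for m
    define w' where "w' m = (w m + \<tau>) mod n" for m
    have split: "(\<Prod>m<Suc s. f m) = (\<Prod>m\<in>{0..<p}. f m) * (\<Prod>m\<in>{p..<q}. f m) * (\<Prod>m\<in>{q..<Suc s}. f m)"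
    proof -
      have a: "prod f {0..<p} * prod f {p..<q} = prod f {0..<q}" using pq by (intro prod.atLeastLessThan_concat) auto
      have b: "prod f {0..<q} * prod f {q..<Suc s} = prod f {0..<Suc s}" using pq by (intro prod.atLeastLessThan_concat) auto
      show ?thesis unfolding lessThan_atLeast0 by (simp only: a b)
    qed
    have P1: "(\<Prod>m\<in>{0..<p}. f m) \<le> mpow n M p ((i + \<tau>) mod n) (w' p)"
    proof -
      have "(\<Prod>m\<in>{0..<p}. f m) = (\<Prod>m<p. M (w' m) (w' (Suc m)))"
        unfolding lessThan_atLeast0[symmetric]
        by (rule prod.cong) (use pq wn sh in \<open>auto simp: f_def w'_def\<close>)
      also have "\<dots> \<le> mpow n M p (w' 0) (w' p)"
        by (rule walk_bound[OF nn]) (auto simp: w'_def n0)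
      finally show ?thesis using w0 by (simp add: w'_def)
    qed
    have P3: "(\<Prod>m\<in>{q..<Suc s}. f m) \<le> mpow n M (Suc s - q) (w q) j"
    proof -
      have "(\<Prod>m\<in>{q..<Suc s}. f m) = (\<Prod>m<Suc s - q. M (w (q + m)) (w (q + Suc m)))"
        by (subst prod.atLeastLessThan_shift_0) (simp add: atLeast0LessThan f_def comp_def)
      also have "\<dots> \<le> mpow n M (Suc s - q) (w (q + 0)) (w (q + (Suc s - q)))"
        using walk_bound[OF nn, of "Suc s - q" "\<lambda>m. w (q + m)"] wn pq by auto
      finally show ?thesis using ws pq by simp
    qed
    have P2: "(\<Prod>m\<in>{p..<q}. f m) \<le> c ^ (q - p)"
    proof -
      have "(\<Prod>m\<in>{p..<q}. f m) \<le> (\<Prod>m\<in>{p..<q}. c)"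
        by (rule prod_mono) (use pq wn nn le in \<open>auto simp: f_def\<close>)
      then show ?thesis by simp
    qed
    have w'p: "w' p < n" using n0 by (simp add: w'_def)
    have T: "c ^ (q - p - 1) \<le> mpow n M (q - p - 1) (w' p) (w q)"
    proof -
      have "((w' p) + (q - p - 1) * \<tau>) mod n = w q"
      proof -
        have "((w p + \<tau>) mod n + (q - p - 1) * \<tau>) mod n = (w p + (\<tau> + (q - p - 1) * \<tau>)) mod n"
          by (simp add: mod_add_left_eq add.assoc)
        also have "\<tau> + (q - p - 1) * \<tau> = (q - p) * \<tau>" using pq
          by (metis Suc_diff_Suc diff_Suc_1 mult_Suc zero_less_diff)
        finally show ?thesis using wq by (simp add: w'_def)
      qed
      then show ?thesis using tau_pow[of n M \<tau> c "w' p" "q - p - 1"] tau c0 n0 w'p by simp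
    qed
    have fnn: "0 \<le> f m" if "m \<le> s" for m using nn wn that by (simp add: f_def)
    have pr1: "0 \<le> (\<Prod>m\<in>{0..<p}. f m)" using fnn pq by (intro prod_nonneg) auto
    have pr2: "0 \<le> (\<Prod>m\<in>{p..<q}. f m)" using fnn pq by (intro prod_nonneg) auto
    have pr3: "0 \<le> (\<Prod>m\<in>{q..<Suc s}. f m)" using fnn pq by (intro prod_nonneg) auto
    have wqn: "w q < n" using wn pq by simp
    have in0: "(i + \<tau>) mod n < n" using n0 by simp
    let ?X1 = "mpow n M p ((i + \<tau>) mod n) (w' p)"
    let ?X2 = "mpow n M (q - p - 1) (w' p) (w q)"
    let ?X3 = "mpow n M (Suc s - q) (w q) j"
    have x1: "0 \<le> ?X1" using nn2 in0 w'p by blast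
    have x2: "0 \<le> ?X2" using nn2 w'p wqn by blast
    have x3: "0 \<le> ?X3" using nn2 wqn j by blast
    have "mpow n M (Suc s) i j = (\<Prod>m\<in>{0..<p}. f m) * (\<Prod>m\<in>{p..<q}. f m) * (\<Prod>m\<in>{q..<Suc s}. f m)"
      using wp split by (simp add: f_def)
    also have "\<dots> \<le> ?X1 * c ^ (q - p) * ?X3"
      using P1 P2 P3 pr1 pr2 pr3 x1 x3 c0 by (intro mult_mono) auto
    also have "\<dots> = c * (?X1 * c ^ (q - p - 1) * ?X3)"
    proof -
      have "c ^ (q - p) = c * c ^ (q - p - 1)" using pq
        by (metis Suc_diff_Suc diff_Suc_1 power_Suc zero_less_diff)
      then show ?thesis by simp
    qed
    also have "\<dots> \<le> c * (?X1 * ?X2 * ?X3)"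
      using T x1 x2 x3 c0 by (intro mult_left_mono mult_right_mono) auto
    also have "\<dots> \<le> c * mpow n M (p + (q - p - 1) + (Suc s - q)) ((i + \<tau>) mod n) j"
    proof -
      have "?X1 * ?X2 \<le> mpow n M (p + (q - p - 1)) ((i + \<tau>) mod n) (w q)"
        using mpow_add[OF nn in0 w'p wqn] .
      then have "?X1 * ?X2 * ?X3 \<le> mpow n M (p + (q - p - 1)) ((i + \<tau>) mod n) (w q) * ?X3"
        using x3 by (intro mult_right_mono)
      also have "\<dots> \<le> mpow n M (p + (q - p - 1) + (Suc s - q)) ((i + \<tau>) mod n) j"
        using mpow_add[OF nn in0 wqn j] .
      finally show ?thesis using c0 by (intro mult_left_mono)
    qed
    also have "p + (q - p - 1) + (Suc s - q) = s" using pq by simp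
    finally show ?thesis .
  qed
qed

lemma circ_eq:
  assumes "circulant n M" "i < n" "j < n" "i' < n" "j' < n"
    and "(int j - int i) mod int n = (int j' - int i') mod int n"
  shows "M i j = M i' j'"
  using assms unfolding circulant_def by metis

lemma circ_shift:
  assumes "circulant n M" "i < n" "j < n" "n > 0"
  shows "M ((i + t) mod n) ((j + t) mod n) = M i j"
proof (rule circ_eq[OF assms(1)])
  show "(int ((j + t) mod n) - int ((i + t) mod n)) mod int n = (int j - int i) mod int n"
    by (simp add: zmod_int mod_diff_eq)
qed (use assms in auto)

lemma circ_diff:
  assumes "circulant n M" "u < n" "v < n" "w < n"
  shows "M w ((w + (v + n - u) mod n) mod n) = M u v"
proof (rule circ_eq[OF assms(1)])
  have "(int ((w + (v + n - u) mod n) mod n) - int w) mod int n = (int w + (int v + int n - int u) - int w) mod int n"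
    using assms by (simp add: zmod_int mod_diff_left_eq mod_add_right_eq of_nat_diff add_diff_eq)
  also have "\<dots> = (int v - int u) mod int n"
  proof -
    have "int w + (int v + int n - int u) - int w = (int v - int u) + int n" by simp
    then show ?thesis by (simp only: mod_add_self2)
  qed
  finally show "(int ((w + (v + n - u) mod n) mod n) - int w) mod int n = (int v - int u) mod int n" .
qed (use assms in auto)

lemma finite_cycles: "finite {cs. is_cycle n M cs}"
proof (rule finite_subset)
  show "{cs. is_cycle n M cs} \<subseteq> {xs. set xs \<subseteq> {0..<n} \<and> length xs \<le> n}"
  proof safe
    fix cs assume c: "is_cycle n M cs"
    then show "\<And>x. x \<in> set cs \<Longrightarrow> x \<in> {0..<n}" by (auto simp: is_cycle_def)
    have "length cs = card (set cs)" using c by (simp add: is_cycle_def distinct_card)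
    also have "\<dots> \<le> card {0..<n}" using c by (intro card_mono) (auto simp: is_cycle_def)
    finally show "length cs \<le> n" by simp
  qed
qed (rule finite_lists_length_le, simp)

lemma mod_cancel_aux:
  fixes u a b n :: nat
  assumes "(u + a) mod n = (u + b) mod n" "a \<le> b"
  shows "(b - a) mod n = 0"
proof -
  have "(u + a + 0) mod n = (u + a + (b - a)) mod n" using assms by simp
  then have "0 mod n = (b - a) mod n" using cong_add_lcancel_nat unfolding cong_def by blast
  then show ?thesis by simp
qed

lemma tau_cycle:
  assumes n0: "n > 0" and c0: "c > 0" and u: "u < n"
    and d: "\<forall>v<n. M v ((v + d) mod n) = c"
  shows "\<exists>cs. is_cycle n M cs \<and> cycle_mean M cs = c \<and> u \<in> set cs \<and> (u, (u + d) mod n) \<in> cycle_edges cs"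
proof -
  define L where "L = (LEAST L. 0 < L \<and> (L * d) mod n = 0)"
  have ex: "0 < n \<and> (n * d) mod n = 0" using n0 by simp
  have L: "0 < L" "(L * d) mod n = 0" using LeastI[of "\<lambda>L. 0 < L \<and> (L * d) mod n = 0", OF ex]
    by (auto simp: L_def)
  have Lmin: "\<not> (k * d) mod n = 0" if "0 < k" "k < L" for k
    using not_less_Least[of k "\<lambda>L. 0 < L \<and> (L * d) mod n = 0"] that by (auto simp: L_def)
  define cs where "cs = map (\<lambda>m. (u + m * d) mod n) [0..<L]"
  have len: "length cs = L" by (simp add: cs_def)
  have nth: "cs ! m = (u + m * d) mod n" if "m < L" for m using that by (simp add: cs_def)
  have E: "cs ! ((m + 1) mod L) = (cs ! m + d) mod n" if "m < L" for m
  proof (cases "m + 1 < L")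
    case True
    then show ?thesis using that by (simp add: nth algebra_simps mod_add_right_eq)
  next
    case False
    then have "m + 1 = L" using that by simp
    then have "(cs ! m + d) mod n = (u + L * d) mod n"
    proof -
      have "(cs ! m + d) mod n = (u + m * d + d) mod n" using that by (simp add: nth mod_add_left_eq)
      also have "u + m * d + d = u + L * d" using \<open>m + 1 = L\<close> by (simp add: algebra_simps flip: \<open>m + 1 = L\<close>)
      finally show ?thesis .
    qed
    also have "\<dots> = u" using L u by (metis add.right_neutral mod_add_right_eq mod_less)
    finally show ?thesis using \<open>m + 1 = L\<close> L nth[of 0] u by simp
  qed
  have dist: "distinct cs"
    unfolding cs_def distinct_map
  proof
    show "inj_on (\<lambda>m. (u + m * d) mod n) (set [0..<L])"
    proof (rule inj_onI)
      fix a b assume ab: "a \<in> set [0..<L]" "b \<in> set [0..<L]" "(u + a * d) mod n = (u + b * d) mod n"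
      show "a = b"
      proof (rule ccontr)
        assume "a \<noteq> b"
        then consider "a < b" | "b < a" by linarith
        then show False
        proof cases
          case 1
          have "((b - a) * d) mod n = 0" using mod_cancel_aux[OF ab(3)] 1
            by (simp add: diff_mult_distrib)
          moreover have "b - a < L" using 1 ab by auto
          ultimately show False using Lmin[of "b - a"] 1 by auto
        next
          case 2
          have "((a - b) * d) mod n = 0" using mod_cancel_aux[OF ab(3)[symmetric]] 2
            by (simp add: diff_mult_distrib)
          moreover have "a - b < L" using 2 ab by auto
          ultimately show False using Lmin[of "a - b"] 2 by auto
        qed
      qed
    qed
  qed simp
  have setn: "set cs \<subseteq> {0..<n}" using n0 by (auto simp: cs_def)
  have edge: "M (cs ! m) (cs ! ((m + 1) mod length cs)) = c" if "m < length cs" for m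
  proof -
    have "cs ! m < n" using setn nth_mem[of m cs] that by (auto simp del: nth_mem)
    then show ?thesis using E[of m] that len d by auto
  qed
  have cyc: "is_cycle n M cs"
    unfolding is_cycle_def using L len dist setn edge c0 by auto
  have "cycle_weight M cs = c ^ L" unfolding cycle_weight_def using edge len by simp
  then have mean: "cycle_mean M cs = c" unfolding cycle_mean_def using len L c0
    by (simp add: real_root_power_cancel)
  have u0: "cs ! 0 = u" using nth[of 0] L u by simp
  have "u \<in> set cs" using u0 L len by (metis nth_mem)
  moreover have "(u, (u + d) mod n) \<in> cycle_edges cs"
    unfolding cycle_edges_def using E[of 0] L len u0 by (auto intro!: exI[of _ 0])
  ultimately show ?thesis using cyc mean by blast
qed

lemma cycle_mean_nonneg:
  assumes "is_cycle n M cs"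
  shows "0 \<le> cycle_mean M cs"
proof -
  have "0 \<le> cycle_weight M cs" unfolding cycle_weight_def
    using assms by (intro prod_nonneg) (auto simp: is_cycle_def less_imp_le)
  then show ?thesis unfolding cycle_mean_def by (rule real_root_ge_zero)
qed

lemma mlambda_ge:
  assumes "is_cycle n M cs"
  shows "cycle_mean M cs \<le> mlambda n M"
proof -
  have ne: "{cs. is_cycle n M cs} \<noteq> {}" using assms by auto
  show ?thesis unfolding mlambda_def using ne assms finite_cycles[of n M]
    by (auto intro!: Max_ge)
qed

lemma mlambda_nonneg: "0 \<le> mlambda n M"
proof (cases "{cs. is_cycle n M cs} = {}")
  case True then show ?thesis by (simp add: mlambda_def)
next
  case False
  then obtain cs where "is_cycle n M cs" by auto
  then show ?thesis using cycle_mean_nonneg mlambda_ge order_trans by blast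
qed

lemma le_lambda:
  assumes nn: "nonneg_mat n M" and ci: "circulant n M" and i: "i < n" and j: "j < n"
  shows "M i j \<le> mlambda n M"
proof (cases "M i j = 0")
  case True then show ?thesis using mlambda_nonneg by simp
next
  case False
  then have pos: "M i j > 0" using nn i j by (auto simp: nonneg_mat_def less_le)
  have n0: "n > 0" using i by simp
  have d: "\<forall>v<n. M v ((v + (j + n - i) mod n) mod n) = M i j"
    using circ_diff[OF ci i j] by blast
  obtain cs where "is_cycle n M cs" "cycle_mean M cs = M i j"
    using tau_cycle[where n=n and c="M i j" and u=i and M=M and d="(j + n - i) mod n", OF n0 pos i d] by blast
  then show ?thesis using mlambda_ge by metis
qed

lemma crit_edge:
  assumes nn: "nonneg_mat n M" and ci: "circulant n M"
    and cs: "cs \<in> critical_cycles n M" and m: "m < length cs"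
  shows "M (cs ! m) (cs ! ((m + 1) mod length cs)) = mlambda n M"
proof -
  define L where "L = length cs"
  define f where "f k = M (cs ! k) (cs ! ((k + 1) mod L))" for k
  define lam where "lam = mlambda n M"
  have cyc: "is_cycle n M cs" and mean: "cycle_mean M cs = lam"
    using cs by (auto simp: critical_cycles_def lam_def)
  have L0: "L > 0" using cyc by (auto simp: is_cycle_def L_def)
  have inn: "cs ! k < n" if "k < L" for k
    using cyc that nth_mem[of k cs] by (auto simp: is_cycle_def L_def simp del: nth_mem)
  have fpos: "f k > 0" if "k < L" for k using cyc that by (auto simp: is_cycle_def L_def f_def)
  have fle: "f k \<le> lam" if "k < L" for k
    unfolding f_def lam_def using le_lambda[OF nn ci] inn that L0 by auto
  define P where "P = (\<Prod>k<L. f k)"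
  have Ppos: "0 \<le> P" unfolding P_def using fpos by (intro prod_nonneg) (auto simp: less_imp_le)
  have lamP: "lam = root L P" using mean by (simp add: cycle_mean_def cycle_weight_def P_def f_def L_def)
  have powP: "lam ^ L = P" using lamP L0 Ppos by simp
  have "P = f m * (\<Prod>k\<in>{..<L} - {m}. f k)"
    unfolding P_def using m by (subst prod.remove[of _ m]) (auto simp: L_def)
  also have "(\<Prod>k\<in>{..<L} - {m}. f k) \<le> (\<Prod>k\<in>{..<L} - {m}. lam)"
    using fpos fle by (intro prod_mono) (auto simp: less_imp_le)
  also have "(\<Prod>k\<in>{..<L} - {m}. lam) = lam ^ (L - 1)" using m by (simp add: L_def)
  finally have ineq: "lam ^ L \<le> f m * lam ^ (L - 1)"
    using powP fpos[of m] m by (simp add: L_def mult_left_mono)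
  have lampos: "lam > 0" using fpos[of m] fle[of m] m by (simp add: L_def)
  have "lam ^ L = lam * lam ^ (L - 1)" using L0 by (metis Suc_diff_1 power_Suc)
  then have "lam * lam ^ (L - 1) \<le> f m * lam ^ (L - 1)" using ineq by simp
  then have "lam \<le> f m" using lampos by (simp add: mult_le_cancel_right)
  then show ?thesis using fle[of m] m by (simp add: f_def L_def lam_def)
qed

lemma exists_tau:
  assumes nn: "nonneg_mat n M" and ci: "circulant n M" and l0: "mlambda n M \<noteq> 0"
  shows "n > 0 \<and> (\<exists>\<tau><n. \<forall>v<n. M v ((v + \<tau>) mod n) = mlambda n M)"
proof -
  have ne: "{cs. is_cycle n M cs} \<noteq> {}"
  proof
    assume "{cs. is_cycle n M cs} = {}"
    then have "mlambda n M = 0" by (simp add: mlambda_def)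
    with l0 show False by simp
  qed
  have "mlambda n M \<in> cycle_mean M ` {cs. is_cycle n M cs}"
    unfolding mlambda_def using ne finite_cycles[of n M] by (simp add: Max_in)
  then obtain cs where cyc: "is_cycle n M cs" and mean: "cycle_mean M cs = mlambda n M" by auto
  then have crit: "cs \<in> critical_cycles n M" by (simp add: critical_cycles_def)
  have L0: "0 < length cs" using cyc by (auto simp: is_cycle_def)
  have e: "M (cs ! 0) (cs ! ((0 + 1) mod length cs)) = mlambda n M"
    using crit_edge[OF nn ci crit L0] .
  have sub: "set cs \<subseteq> {0..<n}" using cyc by (simp add: is_cycle_def)
  have "(0 + 1) mod length cs < length cs" using L0 by (rule mod_less_divisor)
  then have "cs ! ((0 + 1) mod length cs) \<in> set cs" by (rule nth_mem)
  then have v: "cs ! ((0 + 1) mod length cs) < n" using sub by auto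
  have "cs ! 0 \<in> set cs" using L0 by (rule nth_mem)
  then have u: "cs ! 0 < n" using sub by auto
  have n0: "n > 0" using u by simp
  show ?thesis
    using circ_diff[OF ci u v] e n0 by (intro conjI exI[of _ "(cs ! ((0 + 1) mod length cs) + n - cs ! 0) mod n"]) auto
qed

lemma crit_tau:
  assumes n0: "n > 0" and lpos: "mlambda n M > 0"
    and tau: "\<forall>v<n. M v ((v + \<tau>) mod n) = mlambda n M" and u: "u < n"
  shows "crit_equiv n M u ((u + \<tau>) mod n)"
proof -
  have step: "v \<in> crit_nodes n M \<and> (v, (v + \<tau>) mod n) \<in> crit_edges n M" if vn: "v < n" for v
  proof -
    obtain cs where "is_cycle n M cs" "cycle_mean M cs = mlambda n M" "v \<in> set cs"
      "(v, (v + \<tau>) mod n) \<in> cycle_edges cs"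
      using tau_cycle[where n=n and c="mlambda n M" and u=v and M=M and d=\<tau>, OF n0 lpos vn tau] by blast
    then show ?thesis unfolding crit_nodes_def crit_edges_def critical_cycles_def by blast
  qed
  have path: "(v, (v + k * \<tau>) mod n) \<in> (crit_edges n M)\<^sup>*" if "v < n" for v k
  proof (induction k)
    case 0 then show ?case using that by simp
  next
    case (Suc k)
    have "((v + k * \<tau>) mod n, ((v + k * \<tau>) mod n + \<tau>) mod n) \<in> crit_edges n M"
      using step[of "(v + k * \<tau>) mod n"] n0 by simp
    moreover have "((v + k * \<tau>) mod n + \<tau>) mod n = (v + Suc k * \<tau>) mod n"
      by (simp add: mod_add_left_eq mod_add_right_eq algebra_simps)
    ultimately show ?case using Suc.IH by (metis rtrancl_into_rtrancl)
  qed
  have bk: "((u + \<tau>) mod n, u) \<in> (crit_edges n M)\<^sup>*"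
  proof -
    have "(((u + \<tau>) mod n), (((u + \<tau>) mod n) + (n - 1) * \<tau>) mod n) \<in> (crit_edges n M)\<^sup>*"
      using path[of "(u + \<tau>) mod n" "n - 1"] n0 by simp
    moreover have "(((u + \<tau>) mod n) + (n - 1) * \<tau>) mod n = u"
    proof -
      have "(((u + \<tau>) mod n) + (n - 1) * \<tau>) mod n = (u + (\<tau> + (n - 1) * \<tau>)) mod n"
        by (simp add: mod_add_left_eq add.assoc)
      also have "\<tau> + (n - 1) * \<tau> = n * \<tau>" using n0 by (metis Suc_diff_1 mult_Suc)
      finally show ?thesis using u by simp
    qed
    ultimately show ?thesis by simp
  qed
  show ?thesis unfolding crit_equiv_def
    using step[OF u] step[of "(u + \<tau>) mod n"] n0 bk by auto
qed

lemma row_key: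
  assumes nn: "\<forall>i<n. \<forall>j<n. 0 \<le> M i j" and n0: "n > 0" and tn: "\<tau> < n"
    and le: "\<forall>i<n. \<forall>j<n. M i j \<le> c"
    and tau: "\<forall>i<n. M i ((i + \<tau>) mod n) = c"
    and sh: "\<forall>i<n. \<forall>j<n. M ((i + \<tau>) mod n) ((j + \<tau>) mod n) = M i j"
    and c0: "0 \<le> c" and ns: "n \<le> Suc s" and i: "i < n"
  shows "row_mult n (mpow n M (Suc s)) i x = c * row_mult n (mpow n M s) ((i + \<tau>) mod n) x"
proof -
  have "row_mult n (mpow n M (Suc s)) i x = Max ((\<lambda>y. c * y) ` ((\<lambda>k. mpow n M s ((i + \<tau>) mod n) k * x k) ` {0..<n}))"
    unfolding row_mult_def image_image
    by (intro arg_cong[where f=Max] image_cong) (use key[OF nn n0 tn le tau sh c0 ns i] in auto)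
  also have "\<dots> = c * row_mult n (mpow n M s) ((i + \<tau>) mod n) x"
    unfolding row_mult_def
    by (rule mono_Max_commute[symmetric]) (use c0 n0 in \<open>auto intro!: monoI mult_left_mono\<close>)
  finally show ?thesis .
qed

lemma row_prop:
  assumes nn: "\<forall>i<n. \<forall>j<n. 0 \<le> M i j" and n0: "n > 0" and x: "\<forall>k<n. 0 \<le> x k" and i: "i < n"
  shows "row_mult n (mpow n M (Suc s)) i x = Max ((\<lambda>l. M i l * row_mult n (mpow n M s) l x) ` {0..<n})"
proof (rule antisym)
  have fin1: "finite ((\<lambda>l. M i l * row_mult n (mpow n M s) l x) ` {0..<n})"
    "(\<lambda>l. M i l * row_mult n (mpow n M s) l x) ` {0..<n} \<noteq> {}" using n0 by auto
  have fin2: "finite ((\<lambda>k. mpow n M (Suc s) i k * x k) ` {0..<n})"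
    "(\<lambda>k. mpow n M (Suc s) i k * x k) ` {0..<n} \<noteq> {}" using n0 by auto
  show "row_mult n (mpow n M (Suc s)) i x \<le> Max ((\<lambda>l. M i l * row_mult n (mpow n M s) l x) ` {0..<n})"
    unfolding row_mult_def[of n "mpow n M (Suc s)"]
  proof (subst Max_le_iff[OF fin2], safe)
    fix j assume j: "j \<in> {0..<n}"
    have fin3: "finite ((\<lambda>l. M i l * mpow n M s l j) ` {0..<n})" "(\<lambda>l. M i l * mpow n M s l j) ` {0..<n} \<noteq> {}"
      using n0 by auto
    obtain l where l: "l < n" "mpow n M (Suc s) i j = M i l * mpow n M s l j"
      using Max_in[OF fin3] by (auto simp: mmult_def)
    have "mpow n M s l j * x j \<le> row_mult n (mpow n M s) l x"
      unfolding row_mult_def using j by (intro Max_ge) auto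
    then have "mpow n M (Suc s) i j * x j \<le> M i l * row_mult n (mpow n M s) l x"
      using l nn i by (simp add: mult.assoc mult_left_mono)
    also have "\<dots> \<le> Max ((\<lambda>l. M i l * row_mult n (mpow n M s) l x) ` {0..<n})"
      using l by (intro Max_ge) auto
    finally show "mpow n M (Suc s) i j * x j \<le> Max ((\<lambda>l. M i l * row_mult n (mpow n M s) l x) ` {0..<n})" .
  qed
  show "Max ((\<lambda>l. M i l * row_mult n (mpow n M s) l x) ` {0..<n}) \<le> row_mult n (mpow n M (Suc s)) i x"
  proof (subst Max_le_iff[OF fin1], safe)
    fix l assume l: "l \<in> {0..<n}"
    have fin4: "finite ((\<lambda>k. mpow n M s l k * x k) ` {0..<n})" "(\<lambda>k. mpow n M s l k * x k) ` {0..<n} \<noteq> {}"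
      using n0 by auto
    obtain j where j: "j < n" "row_mult n (mpow n M s) l x = mpow n M s l j * x j"
      using Max_in[OF fin4] by (auto simp: row_mult_def)
    have "M i l * row_mult n (mpow n M s) l x = (M i l * mpow n M s l j) * x j" using j by simp
    also have "\<dots> \<le> mpow n M (Suc s) i j * x j"
      using mpow_Suc_ge[of l n M i s j] l x j by (intro mult_right_mono) auto
    also have "\<dots> \<le> row_mult n (mpow n M (Suc s)) i x"
      unfolding row_mult_def using j by (intro Max_ge) auto
    finally show "M i l * row_mult n (mpow n M s) l x \<le> row_mult n (mpow n M (Suc s)) i x" .
  qed
qed

theorem lemma5:
  fixes n :: nat and A B :: "nat \<Rightarrow> nat \<Rightarrow> real" and x :: "nat \<Rightarrow> real"
  assumes "nonneg_mat n A" and "nonneg_mat n B"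
    and "circulant n A" and "circulant n B"
    and "mlambda n A = mlambda n B" and "mlambda n A \<noteq> 0"
    and "mat_le n A B"
    and "\<forall>i<n. 0 \<le> x i"
  shows "x \<in> Attr n B \<longleftrightarrow>
    (\<forall>i<n. \<forall>j<n. crit_equiv n A i j \<longrightarrow>
       row_mult n (mpow n B (n^2)) i x = row_mult n (mpow n B (n^2)) j x)"
proof -
  note nnA = assms(1) and nnB = assms(2) and ciA = assms(3) and ciB = assms(4)
    and leAB = assms(7) and xnn = assms(8)
  define lam where "lam = mlambda n A"
  define N where "N = n ^ 2"
  define V where "V s i = row_mult n (mpow n B s) i x" for s i
  have lamB: "mlambda n B = lam" using assms(5) by (simp add: lam_def)
  obtain \<tau>A where n0: "n > 0" and tA: "\<tau>A < n" and tauA: "\<forall>v<n. A v ((v + \<tau>A) mod n) = lam"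
    using exists_tau[OF nnA ciA assms(6)] by (auto simp: lam_def)
  have lampos: "lam > 0" using mlambda_nonneg[of n A] assms(6) by (simp add: lam_def)
  have nnB': "\<forall>i<n. \<forall>j<n. 0 \<le> B i j" using nnB by (simp add: nonneg_mat_def)
  have Ble: "\<forall>i<n. \<forall>j<n. B i j \<le> lam" using le_lambda[OF nnB ciB] lamB by simp
  have Ale: "\<forall>i<n. \<forall>j<n. A i j \<le> lam" using le_lambda[OF nnA ciA] by (simp add: lam_def)
  have Bsh: "\<forall>i<n. \<forall>j<n. B ((i + t) mod n) ((j + t) mod n) = B i j" for t
    using circ_shift[OF ciB _ _ n0] by blast
  have tauB: "\<forall>v<n. B v ((v + \<tau>A) mod n) = lam"
  proof safe
    fix v assume v: "v < n"
    have "A v ((v + \<tau>A) mod n) \<le> B v ((v + \<tau>A) mod n)" using leAB v n0 by (simp add: mat_le_def)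
    moreover have "(v + \<tau>A) mod n < n" using n0 by simp
    then have "B v ((v + \<tau>A) mod n) \<le> lam" using Ble v by blast
    ultimately show "B v ((v + \<tau>A) mod n) = lam" using tauA v by simp
  qed
  have nN: "n \<le> Suc N"
  proof -
    have "n * 1 \<le> n * n" using n0 by (intro mult_le_mono2) simp
    then show ?thesis unfolding N_def power2_eq_square by linarith
  qed
  have rowK: "V (Suc s) i = lam * V s ((i + \<tau>) mod n)"
    if "\<tau> < n" "\<forall>v<n. B v ((v + \<tau>) mod n) = lam" "n \<le> Suc s" "i < n" for \<tau> s i
    unfolding V_def
    by (rule row_key[OF nnB' n0 that(1) Ble that(2) Bsh]) (use lampos that in auto)
  show ?thesis
  proof
    assume "x \<in> Attr n B"
    then obtain t where t: "\<forall>i<n. V (t + 1) i = lam * V t i"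
      unfolding Attr_def V_def lamB by blast
    have pg: "\<forall>i<n. V (Suc (t + k)) i = lam * V (t + k) i" for k
    proof (induction k)
      case 0 then show ?case using t by simp
    next
      case (Suc k)
      show ?case
      proof safe
        fix i assume i: "i < n"
        have "V (Suc (t + Suc k)) i = Max ((\<lambda>l. B i l * V (Suc (t + k)) l) ` {0..<n})"
          unfolding V_def using row_prop[OF nnB' n0 xnn i, of "Suc (t + k)"] by (simp only: add_Suc_right)
        also have "\<dots> = Max ((\<lambda>y. lam * y) ` ((\<lambda>l. B i l * V (t + k) l) ` {0..<n}))"
          unfolding image_image by (intro arg_cong[where f=Max] image_cong) (use Suc.IH in auto)
        also have "\<dots> = lam * Max ((\<lambda>l. B i l * V (t + k) l) ` {0..<n})"
          by (rule mono_Max_commute[symmetric]) (use lampos n0 in \<open>auto intro!: monoI mult_left_mono\<close>)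
        also have "\<dots> = lam * V (t + Suc k) i"
          unfolding V_def using row_prop[OF nnB' n0 xnn i, of "t + k"] by (simp only: add_Suc_right)
        finally show "V (Suc (t + Suc k)) i = lam * V (t + Suc k) i" .
      qed
    qed
    have inv: "V N ((i + \<tau>) mod n) = V N i"
      if tn: "\<tau> < n" and tb: "\<forall>v<n. B v ((v + \<tau>) mod n) = lam" and i: "i < n" for \<tau> i
    proof -
      have iter: "\<forall>i<n. V (N + k) i = lam ^ k * V N ((i + k * \<tau>) mod n)" for k
      proof (induction k)
        case 0 then show ?case by simp
      next
        case (Suc k)
        show ?case
        proof safe
          fix i assume i: "i < n"
          have "V (N + Suc k) i = lam * V (N + k) ((i + \<tau>) mod n)"
            using rowK[OF tn tb _ i, of "N + k"] nN by simp
          also have "\<dots> = lam * (lam ^ k * V N (((i + \<tau>) mod n + k * \<tau>) mod n))"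
            using Suc.IH n0 by simp
          also have "((i + \<tau>) mod n + k * \<tau>) mod n = (i + Suc k * \<tau>) mod n"
            by (simp add: mod_add_left_eq mod_add_right_eq algebra_simps)
          finally show "V (N + Suc k) i = lam ^ Suc k * V N ((i + Suc k * \<tau>) mod n)" by simp
        qed
      qed
      define S where "S = N + n * t"
      have per: "V S j = lam ^ (n * t) * V N j" if "j < n" for j
      proof -
        have "(j + n * t * \<tau>) mod n = j" using that by (simp add: mult.assoc)
        then show ?thesis using iter[of "n * t"] that by (simp add: S_def)
      qed
      have tt: "t \<le> n * t" using n0 by simp
      have St: "t + (S - t) = S" unfolding S_def using tt by linarith
      have "V (Suc S) i = lam * V S i" using pg[of "S - t"] i unfolding St by blast
      then have "lam * V S i = V (Suc S) i" by simp
      also have "\<dots> = lam * V S ((i + \<tau>) mod n)" using rowK[OF tn tb _ i, of S] nN by (simp add: S_def)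
      finally have "V S ((i + \<tau>) mod n) = V S i" using lampos by simp
      then have "lam ^ (n * t) * V N ((i + \<tau>) mod n) = lam ^ (n * t) * V N i"
        using per[of i] per[of "(i + \<tau>) mod n"] i n0 by simp
      then show ?thesis using lampos by simp
    qed
    show "\<forall>i<n. \<forall>j<n. crit_equiv n A i j \<longrightarrow>
       row_mult n (mpow n B (n^2)) i x = row_mult n (mpow n B (n^2)) j x"
    proof safe
      fix i j assume i: "i < n" and j: "j < n" and ce: "crit_equiv n A i j"
      have "(i, j) \<in> (crit_edges n A)\<^sup>*" using ce by (simp add: crit_equiv_def)
      then have "V N i = V N j"
      proof (induction rule: rtrancl_induct)
        case base then show ?case by simp
      next
        case (step a b)
        from step(2) obtain cs m where cs: "cs \<in> critical_cycles n A" and m: "m < length cs"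
          and ab: "a = cs ! m" "b = cs ! ((m + 1) mod length cs)"
          unfolding crit_edges_def cycle_edges_def by blast
        have sub: "set cs \<subseteq> {0..<n}" using cs by (simp add: critical_cycles_def is_cycle_def)
        have "a \<in> set cs" using ab m by simp
        then have an: "a < n" using sub by auto
        have "(m + 1) mod length cs < length cs" using m by (intro mod_less_divisor) linarith
        then have "b \<in> set cs" using ab by simp
        then have bn: "b < n" using sub by auto
        have Aab: "A a b = lam" using crit_edge[OF nnA ciA cs m] ab by (simp add: lam_def)
        have Bab: "B a b = lam" using leAB an bn Aab Ble by (simp add: mat_le_def) (meson antisym)
        define d where "d = (b + n - a) mod n"
        have dn: "d < n" using n0 by (simp add: d_def)
        have db: "\<forall>v<n. B v ((v + d) mod n) = lam" using circ_diff[OF ciB an bn] Bab by (simp add: d_def)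
        have "(a + d) mod n = b"
        proof -
          have "(a + d) mod n = (a + (b + n - a)) mod n" by (simp add: d_def mod_add_right_eq)
          also have "a + (b + n - a) = b + n" using an by simp
          finally show ?thesis using bn by simp
        qed
        then have "V N b = V N a" using inv[OF dn db an] by simp
        then show ?case using step(3) by simp
      qed
      then show "row_mult n (mpow n B (n^2)) i x = row_mult n (mpow n B (n^2)) j x"
        by (simp add: V_def N_def)
    qed
  next
    assume H: "\<forall>i<n. \<forall>j<n. crit_equiv n A i j \<longrightarrow>
       row_mult n (mpow n B (n^2)) i x = row_mult n (mpow n B (n^2)) j x"
    have "\<forall>i<n. V (N + 1) i = mlambda n B * V N i"
    proof safe
      fix i assume i: "i < n"
      have ce: "crit_equiv n A i ((i + \<tau>A) mod n)"
        using crit_tau[OF n0 _ _ i, of A \<tau>A] lampos tauA by (simp add: lam_def)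
      have pin: "(i + \<tau>A) mod n < n" using n0 by simp
      have "V N i = V N ((i + \<tau>A) mod n)" using H i ce pin unfolding V_def N_def by blast
      then have "V N ((i + \<tau>A) mod n) = V N i" by simp
      then show "V (N + 1) i = mlambda n B * V N i"
        using rowK[OF tA tauB nN i] lamB by simp
    qed
    then show "x \<in> Attr n B" unfolding Attr_def V_def using xnn by blast
  qed
qed

end
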